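(* For a liner $X$ the following are equivalent: (1) $X$ is weakly modular; (2) $X$ is ranked and weakly regular; (3) $X$ is ranked and for any planes $P,\Pi\subseteq X$ with $\|P\cup\Pi\|=4$, the intersection $P\cap\Pi$ is not a singleton.
   Context: A liner is a set $X$ of points with a family of subsets called lines such that any two distinct points lie in a unique line and every line contains at least two points. For distinct $x,y$, $\overline{xy}$ is the line through them. A set is flat if it contains $\overline{xy}$ for all its distinct points $x,y$; $\overline A$ is the smallest flat containing $A$. The rank $\|A\|$ is the smallest cardinality of $B\subseteq X$ with $A\subseteq\overline B$. A plane is a flat of rank $3$. $X$ is ranked if any two flats $A\subseteq B$ with $\|A\|=\|B\|<\omega$ are equal. $X$ is weakly modular if $\|A\cap B\|+\|A\cup B\|=\|A\|+\|B\|$ for all flats $A,B\subseteq X$ with $A\cap B\neq\varnothing$. $X$ is weakly regular if for every flat $A\subseteq X$ and points $a\in A$, $b\in X\setminus A$ we have $\overline{A\cup\{b\}}=\bigcup_{x\in A}\overline{\{a,b,x\}}$. *)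

theory Defs
  imports Main "HOL-Library.Extended_Nat"
begin

definition liner :: "'a set \<Rightarrow> 'a set set \<Rightarrow> bool" where
  "liner X L \<longleftrightarrow>
     (\<forall>l\<in>L. l \<subseteq> X \<and> (\<exists>x y. x \<in> l \<and> y \<in> l \<and> x \<noteq> y)) \<and>
     (\<forall>x\<in>X. \<forall>y\<in>X. x \<noteq> y \<longrightarrow> (\<exists>!l. l \<in> L \<and> x \<in> l \<and> y \<in> l))"

definition line_through :: "'a set set \<Rightarrow> 'a \<Rightarrow> 'a \<Rightarrow> 'a set" where
  "line_through L x y = (THE l. l \<in> L \<and> x \<in> l \<and> y \<in> l)"

definition flat :: "'a set \<Rightarrow> 'a set set \<Rightarrow> 'a set \<Rightarrow> bool" where
  "flat X L A \<longleftrightarrow> A \<subseteq> X \<and>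
     (\<forall>x\<in>A. \<forall>y\<in>A. x \<noteq> y \<longrightarrow> line_through L x y \<subseteq> A)"

definition hull_flat :: "'a set \<Rightarrow> 'a set set \<Rightarrow> 'a set \<Rightarrow> 'a set" where
  "hull_flat X L A = \<Inter>{F. flat X L F \<and> A \<subseteq> F}"

text \<open>Rank: smallest cardinality of B \<subseteq> X with A \<subseteq> hull B; all infinite
  cardinals are collapsed to \<infinity>.\<close>
definition rank :: "'a set \<Rightarrow> 'a set set \<Rightarrow> 'a set \<Rightarrow> enat" where
  "rank X L A =
     (if \<exists>B. finite B \<and> B \<subseteq> X \<and> A \<subseteq> hull_flat X L B
      then enat (LEAST n. \<exists>B. finite B \<and> B \<subseteq> X \<and> A \<subseteq> hull_flat X L B \<and> card B = n)
      else \<infinity>)"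

definition plane :: "'a set \<Rightarrow> 'a set set \<Rightarrow> 'a set \<Rightarrow> bool" where
  "plane X L P \<longleftrightarrow> flat X L P \<and> rank X L P = 3"

definition ranked :: "'a set \<Rightarrow> 'a set set \<Rightarrow> bool" where
  "ranked X L \<longleftrightarrow> (\<forall>A B. flat X L A \<longrightarrow> flat X L B \<longrightarrow> A \<subseteq> B \<longrightarrow>
      rank X L A = rank X L B \<longrightarrow> rank X L A < \<infinity> \<longrightarrow> A = B)"

definition weakly_modular :: "'a set \<Rightarrow> 'a set set \<Rightarrow> bool" where
  "weakly_modular X L \<longleftrightarrow> (\<forall>A B. flat X L A \<longrightarrow> flat X L B \<longrightarrow> A \<inter> B \<noteq> {} \<longrightarrow>
      rank X L (A \<inter> B) + rank X L (A \<union> B) = rank X L A + rank X L B)"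

definition weakly_regular :: "'a set \<Rightarrow> 'a set set \<Rightarrow> bool" where
  "weakly_regular X L \<longleftrightarrow> (\<forall>A a b. flat X L A \<longrightarrow> a \<in> A \<longrightarrow> b \<in> X - A \<longrightarrow>
      hull_flat X L (insert b A) = (\<Union>x\<in>A. hull_flat X L {a, b, x}))"

end

theory Submission
  imports Defs
begin

locale lin =
  fixes X :: "'a set" and L :: "'a set set"
  assumes liner: "liner X L"
begin

abbreviation "hl \<equiv> hull_flat X L"
abbreviation "rk \<equiv> rank X L"
abbreviation "fl \<equiv> flat X L"

lemma line_ex:
  assumes "x \<in> X" "y \<in> X" "x \<noteq> y"
  shows "line_through L x y \<in> L \<and> x \<in> line_through L x y \<and> y \<in> line_through L x y"
proof -
  have u: "\<forall>x\<in>X. \<forall>y\<in>X. x \<noteq> y \<longrightarrow> (\<exists>!l. l \<in> L \<and> x \<in> l \<and> y \<in> l)"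
    using liner unfolding liner_def by (rule conjunct2)
  have "\<exists>!l. l \<in> L \<and> x \<in> l \<and> y \<in> l" using u assms by simp
  then show ?thesis unfolding line_through_def by (rule theI')
qed

lemma line_unique:
  assumes "l \<in> L" "x \<in> l" "y \<in> l" "x \<noteq> y"
  shows "line_through L x y = l"
proof -
  have u: "\<forall>x\<in>X. \<forall>y\<in>X. x \<noteq> y \<longrightarrow> (\<exists>!l. l \<in> L \<and> x \<in> l \<and> y \<in> l)"
    using liner unfolding liner_def by (rule conjunct2)
  have "\<forall>l\<in>L. l \<subseteq> X" using liner unfolding liner_def by blast
  then have "l \<subseteq> X" using assms by blast
  then have "\<exists>!l. l \<in> L \<and> x \<in> l \<and> y \<in> l" using u assms by blast
  then show ?thesis unfolding line_through_def
    by (rule the1_equality) (simp add: assms)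
qed

lemma line_sub: assumes "x \<in> X" "y \<in> X" "x \<noteq> y" shows "line_through L x y \<subseteq> X"
proof -
  have "\<forall>l\<in>L. l \<subseteq> X" using liner unfolding liner_def by blast
  then show ?thesis using line_ex[OF assms] by blast
qed

lemma flat_line: assumes "x \<in> X" "y \<in> X" "x \<noteq> y" shows "fl (line_through L x y)"
proof -
  have "line_through L u v = line_through L x y" if "u \<in> line_through L x y" "v \<in> line_through L x y" "u \<noteq> v" for u v
    using line_unique[OF _ that] line_ex[OF assms] by simp
  then show ?thesis unfolding flat_def using line_sub[OF assms] by (metis order_refl)
qed

lemma flat_X: "fl X"
  unfolding flat_def using line_sub by blast

lemma flat_empty: "fl {}" unfolding flat_def by auto

lemma flat_single: "p \<in> X \<Longrightarrow> fl {p}" unfolding flat_def by auto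

lemma flat_Int: "fl A \<Longrightarrow> fl B \<Longrightarrow> fl (A \<inter> B)" unfolding flat_def by blast

lemma flat_sub: "fl A \<Longrightarrow> A \<subseteq> X" unfolding flat_def by blast

lemma flat_lineD: "fl A \<Longrightarrow> x \<in> A \<Longrightarrow> y \<in> A \<Longrightarrow> x \<noteq> y \<Longrightarrow> line_through L x y \<subseteq> A"
  unfolding flat_def by blast

lemma hull_least: "fl F \<Longrightarrow> S \<subseteq> F \<Longrightarrow> hl S \<subseteq> F"
  unfolding hull_flat_def by blast

lemma hull_sup: "S \<subseteq> hl S"
  unfolding hull_flat_def by blast

lemma hull_sub_X: "S \<subseteq> X \<Longrightarrow> hl S \<subseteq> X"
  using hull_least flat_X by blast

lemma hull_flat: assumes "S \<subseteq> X" shows "fl (hl S)"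
proof -
  have "hl S \<subseteq> X" using hull_sub_X assms .
  moreover have "line_through L x y \<subseteq> hl S" if "x \<in> hl S" "y \<in> hl S" "x \<noteq> y" for x y
  proof
    fix z assume z: "z \<in> line_through L x y"
    show "z \<in> hl S" unfolding hull_flat_def
    proof
      fix F assume F: "F \<in> {F. fl F \<and> S \<subseteq> F}"
      then have "x \<in> F" "y \<in> F" using that unfolding hull_flat_def by auto
      then show "z \<in> F" using F flat_lineD that(3) z by blast
    qed
  qed
  ultimately show ?thesis unfolding flat_def by blast
qed

lemma hull_of_flat: "fl F \<Longrightarrow> hl F = F"
  by (rule antisym[OF hull_least[OF _ order_refl] hull_sup])

lemma hull_mono: assumes "T \<subseteq> X" "S \<subseteq> T" shows "hl S \<subseteq> hl T"
proof (rule hull_least[OF hull_flat[OF assms(1)]])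
  show "S \<subseteq> hl T" using assms(2) hull_sup[of T] by (rule subset_trans)
qed

lemma hull_insert_hull: assumes "S \<subseteq> X" "e \<in> X"
  shows "hl (insert e (hl S)) = hl (insert e S)"
proof (rule antisym)
  have iX: "insert e S \<subseteq> X" using assms by simp
  have "hl S \<subseteq> hl (insert e S)" using hull_mono[OF iX] by (simp add: subset_insertI)
  moreover have "e \<in> hl (insert e S)" using hull_sup[of "insert e S"] by simp
  ultimately have "insert e (hl S) \<subseteq> hl (insert e S)" by simp
  then show "hl (insert e (hl S)) \<subseteq> hl (insert e S)"
    by (rule hull_least[OF hull_flat[OF iX]])
  have i2: "insert e (hl S) \<subseteq> X" using hull_sub_X[OF assms(1)] assms(2) by simp
  have "insert e S \<subseteq> insert e (hl S)" using hull_sup[of S] by (rule insert_mono)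
  then show "hl (insert e S) \<subseteq> hl (insert e (hl S))" by (rule hull_mono[OF i2])
qed

lemma hull_absorb: assumes "S \<subseteq> X" "e \<in> hl S" shows "hl (insert e S) = hl S"
proof (rule antisym)
  have "insert e S \<subseteq> hl S" using hull_sup[of S] assms(2) by simp
  then show "hl (insert e S) \<subseteq> hl S" by (rule hull_least[OF hull_flat[OF assms(1)]])
  have "insert e S \<subseteq> X" using assms hull_sub_X by blast
  then show "hl S \<subseteq> hl (insert e S)" using hull_mono by (simp add: subset_insertI)
qed

lemma hull_two: assumes "x \<in> X" "y \<in> X" "x \<noteq> y" shows "hl {x, y} = line_through L x y"
proof (rule antisym)
  have "{x, y} \<subseteq> line_through L x y" using line_ex[OF assms] by simp
  then show "hl {x, y} \<subseteq> line_through L x y"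
    by (rule hull_least[OF flat_line[OF assms]])
  have xy: "{x, y} \<subseteq> X" using assms by simp
  have "x \<in> hl {x,y}" "y \<in> hl {x,y}" using hull_sup[of "{x,y}"] by auto
  then show "line_through L x y \<subseteq> hl {x, y}"
    using flat_lineD[OF hull_flat[OF xy]] assms(3) by blast
qed

lemma hull_line_eq: assumes "a \<in> X" "b \<in> X" "a \<noteq> b" "x \<in> hl {a, b}" "x \<noteq> a"
  shows "hl {a, x} = hl {a, b}"
proof -
  have ab: "{a, b} \<subseteq> X" using assms by simp
  have xX: "x \<in> X" using assms(4) hull_sub_X[OF ab] by (rule subsetD[rotated])
  have hab: "hl {a, b} = line_through L a b" by (rule hull_two[OF assms(1-3)])
  have "x \<in> line_through L a b" using assms(4) hab by simp
  then have e: "line_through L a x = line_through L a b"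
    using line_unique[of "line_through L a b" a x] line_ex[OF assms(1-3)] assms(5) by simp
  have "a \<noteq> x" using assms(5) by simp
  then have "hl {a, x} = line_through L a x" by (rule hull_two[OF assms(1) xX])
  then show ?thesis using e hab by simp
qed

lemma hull_empty: "hl {} = {}" by (rule hull_of_flat[OF flat_empty])
lemma hull_single: "p \<in> X \<Longrightarrow> hl {p} = {p}" by (rule hull_of_flat[OF flat_single])

lemma rank_le: assumes "finite B" "B \<subseteq> X" "A \<subseteq> hl B" shows "rk A \<le> enat (card B)"
proof -
  have ex: "\<exists>B. finite B \<and> B \<subseteq> X \<and> A \<subseteq> hl B" using assms by blast
  have "(LEAST n. \<exists>B. finite B \<and> B \<subseteq> X \<and> A \<subseteq> hl B \<and> card B = n) \<le> card B"
    by (rule Least_le) (use assms in blast)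
  then show ?thesis unfolding rank_def using ex by simp
qed

lemma rank_wit: assumes "rk A = enat n"
  shows "\<exists>B. finite B \<and> B \<subseteq> X \<and> A \<subseteq> hl B \<and> card B = n"
proof -
  have ex: "\<exists>B. finite B \<and> B \<subseteq> X \<and> A \<subseteq> hl B"
    using assms unfolding rank_def by (metis infinity_ne_i0 enat.simps(3))
  then have "\<exists>m B. finite B \<and> B \<subseteq> X \<and> A \<subseteq> hl B \<and> card B = m" by blast
  then have "\<exists>B. finite B \<and> B \<subseteq> X \<and> A \<subseteq> hl B \<and> card B = (LEAST n. \<exists>B. finite B \<and> B \<subseteq> X \<and> A \<subseteq> hl B \<and> card B = n)"
    by (rule LeastI_ex)
  moreover have "(LEAST n. \<exists>B. finite B \<and> B \<subseteq> X \<and> A \<subseteq> hl B \<and> card B = n) = n"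
    using assms ex unfolding rank_def by simp
  ultimately show ?thesis by simp
qed

lemma rank_hull: assumes "S \<subseteq> X" shows "rk (hl S) = rk S"
proof -
  have e: "(hl S \<subseteq> hl B) = (S \<subseteq> hl B)" if "B \<subseteq> X" for B
    using hull_least[OF hull_flat[OF that]] hull_sup[of S] by blast
  have 1: "(finite B \<and> B \<subseteq> X \<and> hl S \<subseteq> hl B) = (finite B \<and> B \<subseteq> X \<and> S \<subseteq> hl B)" for B
    using e by blast
  have 2: "(finite B \<and> B \<subseteq> X \<and> hl S \<subseteq> hl B \<and> card B = n) = (finite B \<and> B \<subseteq> X \<and> S \<subseteq> hl B \<and> card B = n)" for B n
    using e by blast
  show ?thesis unfolding rank_def by (simp only: 1 2)
qed

lemma rank_mono: assumes "A \<subseteq> A'" shows "rk A \<le> rk A'"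
proof (cases "rk A'")
  case (enat n)
  then obtain B where "finite B" "B \<subseteq> X" "A' \<subseteq> hl B" "card B = n" using rank_wit by blast
  then show ?thesis using rank_le[of B A] assms enat by auto
qed simp

lemma rank_union_fin: assumes "rk S = enat n" "finite F" "F \<subseteq> X"
  shows "rk (S \<union> F) \<le> enat (n + card F)"
proof -
  obtain B where B: "finite B" "B \<subseteq> X" "S \<subseteq> hl B" "card B = n" using rank_wit assms by blast
  have "S \<union> F \<subseteq> hl (B \<union> F)"
    using B hull_mono[of "B \<union> F" B] hull_sup[of "B \<union> F"] assms by blast
  then have "rk (S \<union> F) \<le> enat (card (B \<union> F))" using rank_le B assms by simp
  also have "card (B \<union> F) \<le> n + card F" using card_Un_le B by metis
  finally show ?thesis by simp
qed

lemma rank_fin_le: assumes "rk S = enat n" "finite F" "F \<subseteq> X"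
  shows "\<exists>m. rk (S \<union> F) = enat m"
  using rank_union_fin[OF assms] by (cases "rk (S \<union> F)") auto

lemma rank0: assumes "rk S = 0" shows "S = {}"
  using rank_wit[of S 0] assms hull_empty by (auto simp: zero_enat_def)

lemma rank_le1: assumes "rk S \<le> 1" "x \<in> S" "y \<in> S" shows "x = y"
proof -
  obtain n where n: "rk S = enat n" "n \<le> 1" using assms(1)
    by (cases "rk S") (auto simp: one_enat_def)
  obtain B where B: "finite B" "B \<subseteq> X" "S \<subseteq> hl B" "card B = n" using rank_wit n by blast
  have "card B \<le> 1" using n B by simp
  then have "B = {} \<or> (\<exists>p. B = {p})" using B(1) by (metis card_0_eq card_1_singletonE le_Suc_eq One_nat_def le_zero_eq)
  then show ?thesis
  proof
    assume "B = {}" then show ?thesis using B hull_empty assms by auto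
  next
    assume "\<exists>p. B = {p}" then obtain p where "B = {p}" by blast
    then show ?thesis using B hull_single assms by auto
  qed
qed

lemma rank_single: assumes "p \<in> X" shows "rk {p} = 1"
proof -
  have "rk {p} \<le> 1" using rank_le[of "{p}" "{p}"] assms hull_sup by (simp add: one_enat_def)
  moreover have "rk {p} \<noteq> 0" using rank0 by blast
  ultimately show ?thesis by (metis antisym ileI1 not_gr_zero one_eSuc)
qed

lemma rank_line: assumes "a \<in> X" "b \<in> X" "a \<noteq> b" shows "rk (hl {a, b}) = 2"
proof -
  have le: "rk (hl {a, b}) \<le> enat 2" using rank_le[of "{a,b}" "hl {a,b}"] assms
    by (simp add: eval_nat_numeral)
  have "\<not> rk (hl {a, b}) \<le> 1" using rank_le1[of "hl {a,b}" a b] hull_sup[of "{a,b}"] assms by blast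
  with le show ?thesis
    by (cases "rk (hl {a, b})") (auto simp: one_enat_def numeral_eq_enat)
qed

lemma rank_step:
  assumes rd: "ranked X L" and "fl D" "rk D = enat n" "e \<in> X" "e \<notin> D"
  shows "rk (hl (insert e D)) = enat (Suc n)"
proof -
  have DX: "D \<subseteq> X" using assms flat_sub by blast
  have HX: "insert e D \<subseteq> X" using DX assms by blast
  have "rk (hl (insert e D)) = rk (D \<union> {e})" using rank_hull[OF HX] by simp
  also have "\<dots> \<le> enat (n + 1)" using rank_union_fin[of D n "{e}"] assms by simp
  finally have up: "rk (hl (insert e D)) \<le> enat (Suc n)" by simp
  have sub: "D \<subseteq> hl (insert e D)" using hull_sup by blast
  have lo: "rk D \<le> rk (hl (insert e D))" using rank_mono[OF sub] .
  have ne: "rk (hl (insert e D)) \<noteq> rk D"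
  proof
    assume eq: "rk (hl (insert e D)) = rk D"
    have "D = hl (insert e D)"
      using rd unfolding ranked_def using assms(2,3) hull_flat[OF HX] sub eq by force
    then show False using hull_sup[of "insert e D"] assms by blast
  qed
  show ?thesis using up lo ne assms(3)
    by (cases "rk (hl (insert e D))") auto
qed

lemma rank3:
  assumes rd: "ranked X L" and "c \<in> X" "x \<in> X" "y \<in> X" "x \<noteq> c" "y \<notin> hl {c, x}"
  shows "rk (hl {c, x, y}) = 3"
proof -
  have "rk (hl (insert y (hl {c, x}))) = enat (Suc 2)"
    using rank_step[OF rd hull_flat, of "{c,x}" 2 y] rank_line[of c x] assms
    by (simp add: numeral_eq_enat)
  moreover have "hl (insert y (hl {c, x})) = hl {c, x, y}"
    using hull_insert_hull[of "{c,x}" y] assms by (simp add: insert_commute)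
  ultimately show ?thesis by (simp add: numeral_eq_enat)
qed


lemma rank_empty: "rk {} = 0"
  using rank_le[of "{}" "{}"] by (simp add: zero_enat_def[symmetric])

lemma wm_ranked: assumes wm: "weakly_modular X L" shows "ranked X L"
  unfolding ranked_def
proof (intro allI impI)
  fix A B assume fA: "fl A" and fB: "fl B" and AB: "A \<subseteq> B" and eq: "rk A = rk B" and fin: "rk A < \<infinity>"
  show "A = B"
  proof (rule ccontr)
    assume "A \<noteq> B"
    then obtain b where b: "b \<in> B" "b \<notin> A" using AB by blast
    obtain n where n: "rk A = enat n" using fin by (cases "rk A") auto
    have BX: "B \<subseteq> X" using fB flat_sub by blast
    have AX: "A \<subseteq> X" using fA flat_sub by blast
    show False
    proof (cases "A = {}")
      case True
      then have "rk B = 0" using eq rank_empty by simp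
      then show False using rank0 b by blast
    next
      case False
      then obtain a where a: "a \<in> A" by blast
      have ab: "a \<noteq> b" using a b by blast
      have aX: "a \<in> X" "b \<in> X" using a b AX BX by auto
      define l where "l = hl {a, b}"
      have fl_l: "fl l" unfolding l_def using hull_flat aX by simp
      have Al: "A \<inter> l = {a}"
      proof
        show "{a} \<subseteq> A \<inter> l" using a hull_sup[of "{a,b}"] l_def by auto
        show "A \<inter> l \<subseteq> {a}"
        proof
          fix z assume z: "z \<in> A \<inter> l"
          show "z \<in> {a}"
          proof (rule ccontr)
            assume "z \<notin> {a}"
            then have "hl {a, z} = l" using hull_line_eq[OF aX ab, of z] z l_def by auto
            moreover have "hl {a, z} \<subseteq> A" using hull_least[OF fA] a z by simp
            ultimately show False using hull_sup[of "{a,b}"] l_def b by auto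
          qed
        qed
      qed
      have WM: "\<And>A B. fl A \<Longrightarrow> fl B \<Longrightarrow> A \<inter> B \<noteq> {} \<Longrightarrow> rk (A \<inter> B) + rk (A \<union> B) = rk A + rk B"
        using wm unfolding weakly_modular_def by blast
      have "rk (A \<inter> l) + rk (A \<union> l) = rk A + rk l"
        using WM[OF fA fl_l] Al by simp
      moreover have "rk (A \<inter> l) = 1" using Al rank_single aX by simp
      moreover have "rk l = 2" using rank_line aX ab l_def by simp
      moreover have "rk (A \<union> l) \<le> rk B"
      proof (rule rank_mono)
        have "{a, b} \<subseteq> B" using a b AB by auto
        then have "l \<subseteq> B" unfolding l_def by (rule hull_least[OF fB])
        then show "A \<union> l \<subseteq> B" using AB by simp
      qed
      ultimately show False using n eq
        by (cases "rk (A \<union> l)") (auto simp: one_enat_def numeral_eq_enat)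
    qed
  qed
qed

definition pcond :: bool where
  "pcond \<longleftrightarrow> (\<forall>P Q. plane X L P \<longrightarrow> plane X L Q \<longrightarrow>
                rk (P \<union> Q) = 4 \<longrightarrow> \<not> (\<exists>p. P \<inter> Q = {p}))"

lemma wm_pc: assumes wm: "weakly_modular X L" shows pcond
  unfolding pcond_def
proof (intro allI impI notI)
  fix P Q assume P: "plane X L P" and Q: "plane X L Q" and r4: "rk (P \<union> Q) = 4"
    and "\<exists>p. P \<inter> Q = {p}"
  then obtain p where p: "P \<inter> Q = {p}" by blast
  have "p \<in> X" using p P flat_sub unfolding plane_def by blast
  then have "rk (P \<inter> Q) = 1" using p rank_single by simp
  moreover have WM: "\<And>A B. fl A \<Longrightarrow> fl B \<Longrightarrow> A \<inter> B \<noteq> {} \<Longrightarrow> rk (A \<inter> B) + rk (A \<union> B) = rk A + rk B"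
        using wm unfolding weakly_modular_def by blast
  moreover have "rk (P \<inter> Q) + rk (P \<union> Q) = rk P + rk Q"
  proof -
    have "P \<inter> Q \<noteq> {}" using p by simp
    moreover have "fl P" "fl Q" using P Q unfolding plane_def by auto
    ultimately show ?thesis using WM by blast
  qed
  ultimately show False using r4 P Q unfolding plane_def by simp
qed


lemma lemK:
  assumes rd: "ranked X L" and pc: pcond and fA: "fl A" and a: "a \<in> A" and bX: "b \<in> X" and bA: "b \<notin> A"
    and x1: "x1 \<in> A" and x2: "x2 \<in> A" and w: "w \<in> hl {a, b, x1, x2}"
  shows "\<exists>x\<in>A. w \<in> hl {a, b, x}"
proof -
  have AX: "A \<subseteq> X" using fA flat_sub by blast
  have aX: "a \<in> X" and x1X: "x1 \<in> X" and x2X: "x2 \<in> X" using AX a x1 x2 by auto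
  have ab: "a \<noteq> b" using a bA by blast
  have S4: "{a, b, x1, x2} \<subseteq> X" using aX bX x1X x2X by simp
  show ?thesis
  proof (cases "x2 \<in> hl {a, b, x1}")
    case True
    have "{a, b, x1, x2} \<subseteq> hl {a, b, x1}" using True hull_sup[of "{a,b,x1}"] by simp
    moreover have "{a, b, x1} \<subseteq> X" using aX bX x1X by simp
    ultimately have "hl {a, b, x1, x2} \<subseteq> hl {a, b, x1}"
      using hull_least[OF hull_flat] by blast
    then show ?thesis using w x1 by blast
  next
    case nx2: False
    show ?thesis
    proof (cases "x1 \<in> hl {a, b, x2}")
      case True
      have "{a, b, x1, x2} \<subseteq> hl {a, b, x2}" using True hull_sup[of "{a,b,x2}"] by simp
      moreover have "{a, b, x2} \<subseteq> X" using aX bX x2X by simp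
      ultimately have "hl {a, b, x1, x2} \<subseteq> hl {a, b, x2}"
        using hull_least[OF hull_flat] by blast
      then show ?thesis using w x2 by blast
    next
      case nx1: False
      have x1a: "x1 \<noteq> a" using nx1 hull_sup[of "{a,b,x2}"] by auto
      have "hl {a, x1} \<subseteq> hl {a, b, x1}" by (rule hull_mono) (use aX bX x1X in auto)
      then have x2n: "x2 \<notin> hl {a, x1}" using nx2 by blast
      define P where "P = hl {a, x1, x2}"
      have P3: "rk P = 3" unfolding P_def by (rule rank3[OF rd aX x1X x2X x1a x2n])
      have PX: "{a, x1, x2} \<subseteq> X" using aX x1X x2X by simp
      have fP: "fl P" unfolding P_def by (rule hull_flat[OF PX])
      have PA: "P \<subseteq> A" unfolding P_def by (rule hull_least[OF fA]) (use a x1 x2 in simp)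
      have bP: "b \<notin> P" using PA bA by blast
      have P4: "rk (hl (insert b P)) = enat (Suc 3)"
        using rank_step[OF rd fP _ bX bP] P3 by (simp add: numeral_eq_enat)
      have HH: "hl (insert b P) = hl {a, b, x1, x2}"
        unfolding P_def using hull_insert_hull[OF PX bX] by (simp add: insert_commute)
      define H where "H = hl {a, b, x1, x2}"
      have fH: "fl H" unfolding H_def by (rule hull_flat[OF S4])
      have H4: "rk H = 4" using P4 HH H_def by (simp add: numeral_eq_enat)
      show ?thesis
      proof (cases "w \<in> hl {a, b}")
        case True
        have "{a, b, a} = {a, b}" by auto
        then show ?thesis using True a by metis
      next
        case wn: False
        have wX: "w \<in> X" using w hull_sub_X[OF S4] by blast
        define Q where "Q = hl {a, b, w}"
        have QX: "{a, b, w} \<subseteq> X" using aX bX wX by simp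
        have fQ: "fl Q" unfolding Q_def by (rule hull_flat[OF QX])
        have Q3: "rk Q = 3" unfolding Q_def by (rule rank3[OF rd aX bX wX ab[symmetric] wn])
        have "{a, b, w} \<subseteq> H" using hull_sup[of "{a,b,x1,x2}"] w H_def by auto
        then have QH: "Q \<subseteq> H" unfolding Q_def by (rule hull_least[OF fH])
        have PH: "P \<subseteq> H" unfolding P_def H_def by (rule hull_mono[OF S4]) auto
        have "rk (P \<union> Q) \<le> rk H" using PH QH by (intro rank_mono) simp
        moreover have "rk (hl (insert b P)) \<le> rk (P \<union> Q)"
        proof -
          have "insert b P \<subseteq> X" using bX fP flat_sub by blast
          then have "rk (hl (insert b P)) = rk (insert b P)" by (rule rank_hull)
          moreover have "insert b P \<subseteq> P \<union> Q" using hull_sup[of "{a,b,w}"] Q_def by auto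
          ultimately show ?thesis using rank_mono by simp
        qed
        ultimately have PQ4: "rk (P \<union> Q) = 4" using H4 P4
          by (simp add: numeral_eq_enat)
        have "plane X L P" "plane X L Q" using fP P3 fQ Q3 unfolding plane_def by auto
        then have "\<not> (\<exists>p. P \<inter> Q = {p})" using pc PQ4 unfolding pcond_def by blast
        moreover have "a \<in> P \<inter> Q" using hull_sup[of "{a,b,w}"] hull_sup[of "{a,x1,x2}"] P_def Q_def by auto
        ultimately obtain x where x: "x \<in> P" "x \<in> Q" "x \<noteq> a" by blast
        have xA: "x \<in> A" using x PA by blast
        have xX: "x \<in> X" using xA AX by blast
        have xn: "x \<notin> hl {a, b}"
        proof
          assume "x \<in> hl {a, b}"
          then have "hl {a, x} = hl {a, b}" using hull_line_eq[OF aX bX ab] x(3) by blast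
          moreover have "hl {a, x} \<subseteq> A" by (rule hull_least[OF fA]) (use a xA in simp)
          ultimately show False using hull_sup[of "{a,b}"] bA by auto
        qed
        have R3: "rk (hl {a, b, x}) = 3" by (rule rank3[OF rd aX bX xX ab[symmetric] xn])
        have "{a, b, x} \<subseteq> Q" using hull_sup[of "{a,b,w}"] Q_def x by auto
        then have sub: "hl {a, b, x} \<subseteq> Q" by (rule hull_least[OF fQ])
        have fx: "fl (hl {a, b, x})" by (rule hull_flat) (use aX bX xX in simp)
        have "hl {a, b, x} = Q"
          using rd fx fQ sub R3 Q3 unfolding ranked_def by (simp add: numeral_eq_enat)
        then show ?thesis using xA hull_sup[of "{a,b,w}"] Q_def by auto
      qed
    qed
  qed
qed

lemma pc_wr: assumes rd: "ranked X L" and pc: pcond shows "weakly_regular X L"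
  unfolding weakly_regular_def
proof (intro allI impI)
  fix A a b assume fA: "fl A" and a: "a \<in> A" and b: "b \<in> X - A"
  have AX: "A \<subseteq> X" using fA flat_sub by blast
  have bX: "b \<in> X" and bA: "b \<notin> A" using b by auto
  have iX: "insert b A \<subseteq> X" using AX bX by simp
  define U where "U = (\<Union>x\<in>A. hl {a, b, x})"
  have sX: "{a, b, x} \<subseteq> X" if "x \<in> A" for x using that a AX bX by auto
  have "hl {a, b, x} \<subseteq> hl (insert b A)" if "x \<in> A" for x
    by (rule hull_mono[OF iX]) (use a that in auto)
  then have "U \<subseteq> hl (insert b A)" unfolding U_def by blast
  moreover have "hl (insert b A) \<subseteq> U"
  proof (rule hull_least)
    show "insert b A \<subseteq> U"
    proof
      fix z assume "z \<in> insert b A"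
      then show "z \<in> U"
      proof
        assume "z = b" then show ?thesis unfolding U_def using a hull_sup[of "{a,b,a}"] by blast
      next
        assume "z \<in> A" then show ?thesis unfolding U_def using hull_sup[of "{a,b,z}"] by blast
      qed
    qed
    show "fl U" unfolding flat_def
    proof (intro conjI ballI impI)
      show "U \<subseteq> X" unfolding U_def using hull_sub_X[OF sX] by blast
      fix y z assume y: "y \<in> U" and z: "z \<in> U" and yz: "y \<noteq> z"
      obtain x1 where x1: "x1 \<in> A" "y \<in> hl {a, b, x1}" using y U_def by blast
      obtain x2 where x2: "x2 \<in> A" "z \<in> hl {a, b, x2}" using z U_def by blast
      have S4: "{a, b, x1, x2} \<subseteq> X" using a bX x1 x2 AX by auto
      have "hl {a, b, x1} \<subseteq> hl {a, b, x1, x2}" by (rule hull_mono[OF S4]) auto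
      moreover have "hl {a, b, x2} \<subseteq> hl {a, b, x1, x2}" by (rule hull_mono[OF S4]) auto
      ultimately have "y \<in> hl {a, b, x1, x2}" "z \<in> hl {a, b, x1, x2}" using x1 x2 by auto
      then have "line_through L y z \<subseteq> hl {a, b, x1, x2}"
        using flat_lineD[OF hull_flat[OF S4]] yz by blast
      then show "line_through L y z \<subseteq> U"
        using lemK[OF rd pc fA a bX bA x1(1) x2(1)] unfolding U_def by blast
    qed
  qed
  ultimately show "hl (insert b A) = (\<Union>x\<in>A. hl {a, b, x})" unfolding U_def by blast
qed

lemma wr_pc: assumes rd: "ranked X L" and wr: "weakly_regular X L" shows pcond
  unfolding pcond_def
proof (intro allI impI notI)
  fix P Q assume P: "plane X L P" and Q: "plane X L Q" and r4: "rk (P \<union> Q) = 4"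
    and "\<exists>p. P \<inter> Q = {p}"
  then obtain p where p: "P \<inter> Q = {p}" by blast
  have fP: "fl P" and P3: "rk P = 3" and fQ: "fl Q" and Q3: "rk Q = 3" using P Q unfolding plane_def by auto
  have PX: "P \<subseteq> X" and QX: "Q \<subseteq> X" using fP fQ flat_sub by auto
  have pP: "p \<in> P" and pQ: "p \<in> Q" using p by auto
  have "\<not> Q \<subseteq> P"
  proof
    assume "Q \<subseteq> P"
    then have "P \<union> Q = P" by blast
    then show False using r4 P3 by simp
  qed
  then obtain b where bQ: "b \<in> Q" and bP: "b \<notin> P" by blast
  have bX: "b \<in> X" using bQ QX by blast
  have pX: "p \<in> X" using pP PX by blast
  have pb: "p \<noteq> b" using pP bP by blast
  have WR: "hl (insert b P) = (\<Union>x\<in>P. hl {p, b, x})"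
    using wr fP pP bX bP unfolding weakly_regular_def by blast
  have iX: "insert b P \<subseteq> X" using PX bX by simp
  have PQX: "P \<union> Q \<subseteq> X" using PX QX by simp
  have R4: "rk (hl (insert b P)) = enat (Suc 3)"
    using rank_step[OF rd fP _ bX bP] P3 by (simp add: numeral_eq_enat)
  have sub1: "hl (insert b P) \<subseteq> hl (P \<union> Q)" by (rule hull_mono[OF PQX]) (use bQ in auto)
  have "rk (hl (P \<union> Q)) = 4" using rank_hull[OF PQX] r4 by simp
  then have "hl (insert b P) = hl (P \<union> Q)"
    using rd hull_flat[OF iX] hull_flat[OF PQX] sub1 R4 unfolding ranked_def
    by (simp add: numeral_eq_enat)
  then have Qsub: "Q \<subseteq> hl (insert b P)" using hull_sup[of "P \<union> Q"] by auto
  define l where "l = hl {p, b}"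
  have pbX: "{p, b} \<subseteq> X" using pX bX by simp
  have fl_l: "fl l" unfolding l_def by (rule hull_flat[OF pbX])
  have lQ: "l \<subseteq> Q" unfolding l_def by (rule hull_least[OF fQ]) (use pQ bQ in simp)
  have l2: "rk l = 2" unfolding l_def by (rule rank_line[OF pX bX pb])
  have "\<not> Q \<subseteq> l"
  proof
    assume "Q \<subseteq> l"
    then have "Q = l" using lQ by blast
    then show False using Q3 l2 by simp
  qed
  then obtain q where qQ: "q \<in> Q" and ql: "q \<notin> l" by blast
  have qX: "q \<in> X" using qQ QX by blast
  obtain x where xP: "x \<in> P" and qx: "q \<in> hl {p, b, x}" using Qsub qQ WR by blast
  have xX: "x \<in> X" using xP PX by blast
  have R3q: "rk (hl {p, b, q}) = 3" by (rule rank3[OF rd pX bX qX pb[symmetric]]) (use ql l_def in simp)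
  have fq: "fl (hl {p, b, q})" by (rule hull_flat) (use pX bX qX in simp)
  have subq: "hl {p, b, q} \<subseteq> Q" by (rule hull_least[OF fQ]) (use pQ bQ qQ in simp)
  have eqQ: "hl {p, b, q} = Q"
    using rd fq fQ subq R3q Q3 unfolding ranked_def by (simp add: numeral_eq_enat)
  have xl: "x \<notin> l"
  proof
    assume "x \<in> l"
    then have "{p, b, x} \<subseteq> l" using hull_sup[of "{p,b}"] l_def by auto
    then have "hl {p, b, x} \<subseteq> l" by (rule hull_least[OF fl_l])
    then show False using qx ql by blast
  qed
  have R3x: "rk (hl {p, b, x}) = 3" by (rule rank3[OF rd pX bX xX pb[symmetric]]) (use xl l_def in simp)
  have fx: "fl (hl {p, b, x})" by (rule hull_flat) (use pX bX xX in simp)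
  have "{p, b, q} \<subseteq> hl {p, b, x}" using qx hull_sup[of "{p,b,x}"] by auto
  then have subx: "hl {p, b, q} \<subseteq> hl {p, b, x}" by (rule hull_least[OF fx])
  have "hl {p, b, q} = hl {p, b, x}"
    using rd fq fx subx R3q R3x unfolding ranked_def by (simp add: numeral_eq_enat)
  then have "x \<in> Q" using eqQ hull_sup[of "{p,b,x}"] by auto
  then have "x = p" using xP p by blast
  then show False using xl hull_sup[of "{p,b}"] l_def by auto
qed


lemma join:
  assumes wr: "weakly_regular X L" and fA: "fl A" and c: "c \<in> A" and F: "finite F" "F \<subseteq> X"
  shows "\<forall>z \<in> hl (A \<union> F). \<exists>x\<in>A. \<exists>y \<in> hl (insert c F). z \<in> hl {c, x, y}"
  using F
proof (induction F rule: finite_induct)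
  case empty
  have AX: "A \<subseteq> X" using fA flat_sub by blast
  show ?case
  proof
    fix z assume "z \<in> hl (A \<union> {})"
    then have z: "z \<in> A" using hull_of_flat[OF fA] by simp
    have "c \<in> hl (insert c {})" using hull_sup[of "insert c {}"] by simp
    moreover have "z \<in> hl {c, z, c}" using hull_sup[of "{c,z,c}"] by simp
    ultimately show "\<exists>x\<in>A. \<exists>y \<in> hl (insert c {}). z \<in> hl {c, x, y}" using z by blast
  qed
next
  case (insert e F)
  have AX: "A \<subseteq> X" using fA flat_sub by blast
  have cX: "c \<in> X" using c AX by blast
  have eX: "e \<in> X" and FX: "F \<subseteq> X" using insert.prems by auto
  have IH: "\<forall>z \<in> hl (A \<union> F). \<exists>x\<in>A. \<exists>y \<in> hl (insert c F). z \<in> hl {c, x, y}"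
    using insert.IH FX by blast
  define D where "D = hl (A \<union> F)"
  have AFX: "A \<union> F \<subseteq> X" using AX FX by simp
  have fD: "fl D" unfolding D_def by (rule hull_flat[OF AFX])
  have cD: "c \<in> D" unfolding D_def using hull_sup[of "A \<union> F"] c by blast
  have DX: "D \<subseteq> X" using fD flat_sub by blast
  have hD: "hl (A \<union> insert e F) = hl (insert e D)"
    unfolding D_def using hull_insert_hull[OF AFX eX] by simp
  define N where "N = hl (insert c (insert e F))"
  have NX: "insert c (insert e F) \<subseteq> X" using cX eX FX by simp
  have fN: "fl N" unfolding N_def by (rule hull_flat[OF NX])
  have sN: "hl (insert c F) \<subseteq> N" unfolding N_def by (rule hull_mono[OF NX]) auto
  show ?case
  proof
    fix z assume z: "z \<in> hl (A \<union> insert e F)"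
    show "\<exists>x\<in>A. \<exists>y \<in> hl (insert c (insert e F)). z \<in> hl {c, x, y}"
    proof (cases "e \<in> D")
      case True
      then have "insert e D = D" by blast
      then have "z \<in> D" using z hD hull_of_flat[OF fD] by simp
      then obtain x y where "x \<in> A" "y \<in> hl (insert c F)" "z \<in> hl {c, x, y}"
        using IH unfolding D_def by blast
      then show ?thesis using sN unfolding N_def by blast
    next
      case False
      have "hl (insert e D) = (\<Union>w\<in>D. hl {c, e, w})"
        using wr fD cD eX False unfolding weakly_regular_def by blast
      then obtain w where wD: "w \<in> D" and zw: "z \<in> hl {c, e, w}" using z hD by auto
      obtain x y2 where xA: "x \<in> A" and y2: "y2 \<in> hl (insert c F)" and wx: "w \<in> hl {c, x, y2}"
        using IH wD unfolding D_def by blast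
      have xX: "x \<in> X" using xA AX by blast
      have y2X: "y2 \<in> X" using y2 hull_sub_X[of "insert c F"] cX FX by blast
      have wX: "w \<in> X" using wD DX by blast
      define M where "M = hl {c, y2, e}"
      have MX0: "{c, y2, e} \<subseteq> X" using cX y2X eX by simp
      have fM: "fl M" unfolding M_def by (rule hull_flat[OF MX0])
      have MX: "M \<subseteq> X" using fM flat_sub by blast
      have cM: "c \<in> M" and y2M: "y2 \<in> M" and eM: "e \<in> M" using hull_sup[of "{c,y2,e}"] unfolding M_def by auto
      have "{c, y2, e} \<subseteq> N" using hull_sup[of "insert c (insert e F)"] y2 sN unfolding N_def by auto
      then have MN: "M \<subseteq> N" unfolding M_def by (rule hull_least[OF fN])
      show ?thesis
      proof (cases "x \<in> M")
        case True
        have "hl {c, x, y2} \<subseteq> M" by (rule hull_least[OF fM]) (use cM True y2M in simp)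
        then have "w \<in> M" using wx by blast
        then have "hl {c, e, w} \<subseteq> M" using cM eM hull_least[OF fM, of "{c,e,w}"] by simp
        then have "z \<in> M" using zw by blast
        moreover have "z \<in> hl {c, c, z}" using hull_sup[of "{c,c,z}"] by simp
        ultimately show ?thesis using c MN unfolding N_def by blast
      next
        case xM: False
        have WR2: "hl (insert x M) = (\<Union>y\<in>M. hl {c, x, y})"
          using wr fM cM xX xM unfolding weakly_regular_def by blast
        have iX: "insert x M \<subseteq> X" using xX MX by simp
        have fI: "fl (hl (insert x M))" by (rule hull_flat[OF iX])
        have Isup: "insert x M \<subseteq> hl (insert x M)" by (rule hull_sup)
        have "{c, x, y2} \<subseteq> hl (insert x M)" using Isup cM y2M by auto
        then have "hl {c, x, y2} \<subseteq> hl (insert x M)" by (rule hull_least[OF fI])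
        then have "w \<in> hl (insert x M)" using wx by blast
        then have "{c, e, w} \<subseteq> hl (insert x M)" using Isup cM eM by auto
        then have "hl {c, e, w} \<subseteq> hl (insert x M)" by (rule hull_least[OF fI])
        then have "z \<in> hl (insert x M)" using zw by blast
        then obtain y where "y \<in> M" "z \<in> hl {c, x, y}" using WR2 by blast
        then show ?thesis using xA MN unfolding N_def by blast
      qed
    qed
  qed
qed


lemma modular_F:
  assumes rd: "ranked X L" and wr: "weakly_regular X L" and fA: "fl A" and fB: "fl B"
    and c: "c \<in> A" "c \<in> B" and nA: "rk A = enat na" and nC: "rk (A \<inter> B) = enat nc"
    and F: "finite F" "F \<subseteq> B"
  shows "rk (hl (A \<union> F)) + rk (A \<inter> B) = rk A + rk (hl ((A \<inter> B) \<union> F))"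
  using F
proof (induction F rule: finite_induct)
  case empty
  have "fl (A \<inter> B)" using flat_Int[OF fA fB] .
  then show ?case using hull_of_flat fA by (simp add: add.commute)
next
  case (insert e F)
  define C where "C = A \<inter> B"
  have AX: "A \<subseteq> X" using fA flat_sub by blast
  have BX: "B \<subseteq> X" using fB flat_sub by blast
  have FB: "F \<subseteq> B" and eB: "e \<in> B" using insert.prems by auto
  have FX: "F \<subseteq> X" using FB BX by blast
  have eX: "e \<in> X" using eB BX by blast
  have IH: "rk (hl (A \<union> F)) + rk C = rk A + rk (hl (C \<union> F))"
    using insert.IH FB unfolding C_def by blast
  have fC: "fl C" unfolding C_def by (rule flat_Int[OF fA fB])
  have CX: "C \<subseteq> X" using fC flat_sub by blast
  have cC: "c \<in> C" unfolding C_def using c by blast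
  define D where "D = hl (A \<union> F)"
  define BF where "BF = hl (C \<union> F)"
  have AFX: "A \<union> F \<subseteq> X" using AX FX by simp
  have CFX: "C \<union> F \<subseteq> X" using CX FX by simp
  have fD: "fl D" unfolding D_def by (rule hull_flat[OF AFX])
  have fBF: "fl BF" unfolding BF_def by (rule hull_flat[OF CFX])
  have BFB: "BF \<subseteq> B" unfolding BF_def by (rule hull_least[OF fB]) (use FB in \<open>auto simp: C_def\<close>)
  have BFD: "BF \<subseteq> D" unfolding BF_def D_def by (rule hull_mono[OF AFX]) (auto simp: C_def)
  have CBF: "C \<subseteq> BF" unfolding BF_def using hull_sup[of "C \<union> F"] by blast
  have hD: "hl (A \<union> insert e F) = hl (insert e D)"
    unfolding D_def using hull_insert_hull[OF AFX eX] by simp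
  have hBF: "hl (C \<union> insert e F) = hl (insert e BF)"
    unfolding BF_def using hull_insert_hull[OF CFX eX] by simp
  obtain nD where nD: "rk D = enat nD"
    using rank_fin_le[OF nA insert.hyps(1) FX] rank_hull[OF AFX] unfolding D_def by auto
  obtain nBF where nBF: "rk BF = enat nBF"
    using rank_fin_le[OF nC insert.hyps(1) FX] rank_hull[OF CFX] unfolding BF_def C_def by auto
  show ?case
  proof (cases "e \<in> BF")
    case True
    have "insert e D = D" using True BFD by blast
    moreover have "insert e BF = BF" using True by blast
    ultimately show ?thesis using IH hD hBF hull_of_flat[OF fD] hull_of_flat[OF fBF]
      unfolding D_def BF_def C_def by simp
  next
    case False
    have eD: "e \<notin> D"
    proof
      assume "e \<in> D"
      then obtain x y where xA: "x \<in> A" and y: "y \<in> hl (insert c F)" and exy: "e \<in> hl {c, x, y}"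
        using join[OF wr fA c(1) insert.hyps(1) FX] unfolding D_def by blast
      have "insert c F \<subseteq> BF" using cC CBF hull_sup[of "C \<union> F"] unfolding BF_def by blast
      then have "hl (insert c F) \<subseteq> BF" by (rule hull_least[OF fBF])
      then have yBF: "y \<in> BF" using y by blast
      have cX: "c \<in> X" using c AX by blast
      have xX: "x \<in> X" using xA AX by blast
      have yX: "y \<in> X" using yBF fBF flat_sub by blast
      have cBF: "c \<in> BF" using cC CBF by blast
      have xBF: "x \<notin> BF"
      proof
        assume "x \<in> BF"
        then have "hl {c, x, y} \<subseteq> BF" using hull_least[OF fBF, of "{c,x,y}"] cBF yBF by simp
        then show False using exy False by blast
      qed
      have xc: "x \<noteq> c" using xBF cBF by blast
      have ec: "e \<noteq> c" using False cBF by blast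
      have xB: "x \<in> B"
      proof (cases "y \<in> hl {c, x}")
        case True
        have cxX: "{c, x} \<subseteq> X" using cX xX by simp
        have "hl {c, x, y} \<subseteq> hl {c, x}"
          using hull_least[OF hull_flat[OF cxX], of "{c,x,y}"] True hull_sup[of "{c,x}"] by simp
        then have "e \<in> hl {c, x}" using exy by blast
        then have "hl {c, e} = hl {c, x}" using hull_line_eq[OF cX xX xc[symmetric]] ec by blast
        moreover have "hl {c, e} \<subseteq> B" using hull_least[OF fB, of "{c,e}"] c eB by simp
        ultimately show ?thesis using hull_sup[of "{c,x}"] by auto
      next
        case yn: False
        have R1: "rk (hl {c, x, y}) = 3" by (rule rank3[OF rd cX xX yX xc yn])
        have yc: "y \<noteq> c" using yn hull_sup[of "{c,x}"] by auto
        have "hl {c, y} \<subseteq> BF" using hull_least[OF fBF, of "{c,y}"] cBF yBF by simp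
        then have en: "e \<notin> hl {c, y}" using False by blast
        have R2: "rk (hl {c, y, e}) = 3" by (rule rank3[OF rd cX yX eX yc en])
        have f1: "fl (hl {c, x, y})" by (rule hull_flat) (use cX xX yX in simp)
        have f2: "fl (hl {c, y, e})" by (rule hull_flat) (use cX yX eX in simp)
        have "{c, y, e} \<subseteq> hl {c, x, y}" using hull_sup[of "{c,x,y}"] exy by auto
        then have sub: "hl {c, y, e} \<subseteq> hl {c, x, y}" by (rule hull_least[OF f1])
        have "hl {c, y, e} = hl {c, x, y}"
          using rd f1 f2 sub R1 R2 unfolding ranked_def by (simp add: numeral_eq_enat)
        moreover have "hl {c, y, e} \<subseteq> B"
          using hull_least[OF fB, of "{c,y,e}"] c eB yBF BFB by auto
        ultimately show ?thesis using hull_sup[of "{c,x,y}"] by auto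
      qed
      then have "x \<in> C" using xA unfolding C_def by blast
      then show False using xBF CBF by blast
    qed
    have r1: "rk (hl (insert e D)) = enat (Suc nD)" by (rule rank_step[OF rd fD nD eX eD])
    have r2: "rk (hl (insert e BF)) = enat (Suc nBF)" by (rule rank_step[OF rd fBF nBF eX False])
    have "rk (hl (A \<union> insert e F)) + rk C = (rk D + rk C) + 1"
      using hD r1 nD by (simp add: eSuc_enat[symmetric] eSuc_plus_1 ac_simps)
    also have "\<dots> = rk A + rk BF + 1" using IH unfolding D_def BF_def by simp
    also have "\<dots> = rk A + rk (hl (C \<union> insert e F))"
      using hBF r2 nBF by (simp add: eSuc_enat[symmetric] eSuc_plus_1 ac_simps)
    finally show ?thesis unfolding C_def .
  qed
qed

lemma exists_F:
  assumes rd: "ranked X L" and fB: "fl B" and fC: "fl C" and CB: "C \<subseteq> B" and nB: "rk B = enat nb"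
  shows "\<exists>F. finite F \<and> F \<subseteq> B \<and> hl (C \<union> F) = B"
proof -
  have BX: "B \<subseteq> X" using fB flat_sub by blast
  define P where "P = (\<lambda>m. \<exists>F. finite F \<and> F \<subseteq> B \<and> rk (hl (C \<union> F)) = enat m)"
  have bnd: "m \<le> nb" if "F \<subseteq> B" "rk (hl (C \<union> F)) = enat m" for F m
  proof -
    have "hl (C \<union> F) \<subseteq> B" by (rule hull_least[OF fB]) (use CB that in simp)
    then have "rk (hl (C \<union> F)) \<le> rk B" by (rule rank_mono)
    then show ?thesis using that nB by simp
  qed
  have bnd2: "\<forall>y. P y \<longrightarrow> id y < Suc nb"
  proof (intro allI impI)
    fix y assume "P y"
    then obtain F where "F \<subseteq> B" "rk (hl (C \<union> F)) = enat y" unfolding P_def by blast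
    then have "y \<le> nb" by (rule bnd)
    then show "id y < Suc nb" by simp
  qed
  have "rk C \<le> enat nb" using rank_mono[OF CB] nB by simp
  then obtain m0 where m0: "rk C = enat m0" by (cases "rk C") auto
  have "P m0" unfolding P_def
  proof (intro exI conjI)
    show "finite {}" "{} \<subseteq> B" by auto
    show "rk (hl (C \<union> {})) = enat m0" using hull_of_flat[OF fC] m0 by simp
  qed
  then obtain m where Pm: "P m" and mx: "\<forall>y. P y \<longrightarrow> id y \<le> id m"
    using ex_has_greatest_nat[of P m0 id "Suc nb"] bnd2 by blast
  obtain F where F: "finite F" "F \<subseteq> B" "rk (hl (C \<union> F)) = enat m" using Pm unfolding P_def by blast
  have CFX: "C \<union> F \<subseteq> X" using CB F BX by blast
  have "B \<subseteq> hl (C \<union> F)"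
  proof
    fix e assume eB: "e \<in> B"
    show "e \<in> hl (C \<union> F)"
    proof (rule ccontr)
      assume en: "e \<notin> hl (C \<union> F)"
      have eX: "e \<in> X" using eB BX by blast
      have "rk (hl (insert e (hl (C \<union> F)))) = enat (Suc m)"
        by (rule rank_step[OF rd hull_flat[OF CFX] F(3) eX en])
      moreover have "hl (insert e (hl (C \<union> F))) = hl (C \<union> insert e F)"
        using hull_insert_hull[OF CFX eX] by simp
      ultimately have r: "rk (hl (C \<union> insert e F)) = enat (Suc m)" by simp
      have "P (Suc m)" unfolding P_def
      proof (intro exI conjI)
        show "finite (insert e F)" using F(1) by simp
        show "insert e F \<subseteq> B" using F(2) eB by simp
        show "rk (hl (C \<union> insert e F)) = enat (Suc m)" by (rule r)
      qed
      then have "Suc m \<le> m" using mx by simp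
      then show False by simp
    qed
  qed
  moreover have "hl (C \<union> F) \<subseteq> B" by (rule hull_least[OF fB]) (use CB F in simp)
  ultimately show ?thesis using F by blast
qed

lemma wr_wm: assumes rd: "ranked X L" and wr: "weakly_regular X L" shows "weakly_modular X L"
  unfolding weakly_modular_def
proof (intro allI impI)
  fix A B assume fA: "fl A" and fB: "fl B" and ne: "A \<inter> B \<noteq> {}"
  then obtain c where c: "c \<in> A" "c \<in> B" by blast
  have AX: "A \<subseteq> X" using fA flat_sub by blast
  have BX: "B \<subseteq> X" using fB flat_sub by blast
  show "rk (A \<inter> B) + rk (A \<union> B) = rk A + rk B"
  proof (cases "rk A = \<infinity> \<or> rk B = \<infinity>")
    case True
    have "rk A \<le> rk (A \<union> B)" "rk B \<le> rk (A \<union> B)" by (auto intro: rank_mono)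
    then have "rk (A \<union> B) = \<infinity>" using True by auto
    then show ?thesis using True by auto
  next
    case False
    then obtain na nb where nA: "rk A = enat na" and nB: "rk B = enat nb" by auto
    obtain nc where nC: "rk (A \<inter> B) = enat nc"
      using rank_mono[of "A \<inter> B" A] nA by (cases "rk (A \<inter> B)") auto
    have fC: "fl (A \<inter> B)" by (rule flat_Int[OF fA fB])
    obtain F where F: "finite F" "F \<subseteq> B" "hl ((A \<inter> B) \<union> F) = B"
      using exists_F[OF rd fB fC _ nB] by blast
    have M: "rk (hl (A \<union> F)) + rk (A \<inter> B) = rk A + rk B"
      using modular_F[OF rd wr fA fB c nA nC F(1,2)] F(3) by simp
    have AFX: "A \<union> F \<subseteq> X" using AX F BX by blast
    have ABX: "A \<union> B \<subseteq> X" using AX BX by blast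
    have "hl (A \<union> F) = hl (A \<union> B)"
    proof (rule antisym)
      show "hl (A \<union> F) \<subseteq> hl (A \<union> B)" by (rule hull_mono[OF ABX]) (use F in blast)
      have "hl ((A \<inter> B) \<union> F) \<subseteq> hl (A \<union> F)" by (rule hull_mono[OF AFX]) blast
      then have "B \<subseteq> hl (A \<union> F)" using F(3) by simp
      then have "A \<union> B \<subseteq> hl (A \<union> F)" using hull_sup[of "A \<union> F"] by blast
      then show "hl (A \<union> B) \<subseteq> hl (A \<union> F)" by (rule hull_least[OF hull_flat[OF AFX]])
    qed
    then have "rk (hl (A \<union> F)) = rk (A \<union> B)" using rank_hull[OF ABX] by simp
    then show ?thesis using M by (simp add: add.commute)
  qed
qed
end

theorem theorem5p4p1:
  assumes "liner X L"
  shows "(weakly_modular X L \<longleftrightarrow> ranked X L \<and> weakly_regular X L) \<and>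
         (ranked X L \<and> weakly_regular X L \<longleftrightarrow>
            ranked X L \<and> (\<forall>P Q. plane X L P \<longrightarrow> plane X L Q \<longrightarrow>
                rank X L (P \<union> Q) = 4 \<longrightarrow> \<not> (\<exists>p. P \<inter> Q = {p})))"
proof -
  interpret lin X L using assms by unfold_locales
  have 1: "weakly_modular X L \<longleftrightarrow> ranked X L \<and> weakly_regular X L"
    using wm_ranked wm_pc pc_wr wr_wm by blast
  have 2: "ranked X L \<and> weakly_regular X L \<longleftrightarrow> ranked X L \<and> pcond"
    using wr_pc pc_wr by blast
  show ?thesis using 1 2 unfolding pcond_def by blast
qed

end
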